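(* Let $k\in\{1,\dots,N-1\}$. For every integer $m\ge1$ with $m\le (N-k)/2$, $$Z^{2m-1}|0_k\rangle=\prod_{j=0}^{m-1}\Big(\frac{n_{k+2j+1}}{n_{k+2j}}\Big)^{1/2}\varphi_{0_{k+2m-1}},\qquad Z^{2m}|0_k\rangle=\prod_{j=0}^{m-1}\Big(\frac{n_{k+2j+1}}{n_{k+2j}}\Big)^{1/2}|0_{k+2m}\rangle.$$
   Context: Fix $N\ge2$ and integers $n_1\ge n_2\ge\dots\ge n_N\ge1$. Let $\mathcal H=\bigoplus_{k=1}^N E_k$ where $E_k$ has orthonormal basis $\{|a_k\rangle:0\le a\le n_k-1\}$. For vectors $x,y$, $|x\rangle\langle y|$ is the operator $u\mapsto\langle y,u\rangle x$. $\zeta_k=e^{2\pi i/n_k}$, $\varphi_{a_k}=n_k^{-1/2}\sum_{b=0}^{n_k-1}\zeta_k^{-ba}|b_k\rangle$. For $1\le k\le N-1$, $Z_k=n_k^{-1/2}\sum_{b=0}^{n_{k+1}-1}\sum_{a=0}^{n_k-1}\zeta_k^{ba}|b_{k+1}\rangle\langle a_k|$, and the transport operator is $Z=\sum_{k=1}^{N-1}Z_k$ (acting on $\mathcal H$, equal to $Z_k$ on $E_k$ and zero on $E_N$). *)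

theory Defs
  imports Complex_Main
begin

text \<open>Vectors of H = (+)_{k=1..N} E_k are modelled as functions v :: nat => nat => complex,
 v k a being the coefficient of the basis vector |a_k> (meaningful for 1 <= k <= N, a < n k).\<close>

type_synonym hvec = "nat \<Rightarrow> nat \<Rightarrow> complex"

definition zeta :: "(nat \<Rightarrow> nat) \<Rightarrow> nat \<Rightarrow> complex" where
  "zeta n k = exp (2 * of_real pi * \<i> / of_nat (n k))"

definition ket :: "(nat \<Rightarrow> nat) \<Rightarrow> nat \<Rightarrow> nat \<Rightarrow> hvec" where
  "ket n k a = (\<lambda>j b. if j = k \<and> b = a then 1 else 0)"

definition phi :: "(nat \<Rightarrow> nat) \<Rightarrow> nat \<Rightarrow> nat \<Rightarrow> hvec" where
  "phi n k a = (\<lambda>j b. if j = k \<and> b < n k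
      then of_real (1 / sqrt (real (n k))) * inverse (zeta n k ^ (b * a)) else 0)"

text \<open>Transport operator Z = sum_{k=1}^{N-1} Z_k, where
  Z_k = n_k^{-1/2} sum_{b<n_{k+1}} sum_{a<n_k} zeta_k^{ba} |b_{k+1}><a_k|.\<close>
definition Zop :: "nat \<Rightarrow> (nat \<Rightarrow> nat) \<Rightarrow> hvec \<Rightarrow> hvec" where
  "Zop N n v = (\<lambda>j b. if 2 \<le> j \<and> j \<le> N \<and> b < n j
      then of_real (1 / sqrt (real (n (j - 1)))) *
           (\<Sum>a<n (j - 1). zeta n (j - 1) ^ (b * a) * v (j - 1) a)
      else 0)"

definition scaleH :: "complex \<Rightarrow> hvec \<Rightarrow> hvec" where
  "scaleH c v = (\<lambda>j b. c * v j b)"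

end

theory Submission
  imports Defs "HOL-Analysis.Complex_Transcendental"
begin

lemma zeta_pow: "zeta n k ^ b = exp (2 * of_real pi * \<i> * of_nat b / of_nat (n k))"
  unfolding zeta_def by (simp add: exp_of_nat_mult[symmetric] mult_ac)

lemma zeta_pow_n: "n k > 0 \<Longrightarrow> zeta n k ^ n k = 1"
  by (simp add: zeta_pow)

lemma zeta_pow_ne1:
  assumes "0 < b" "b < n k" shows "zeta n k ^ b \<noteq> 1"
proof
  assume "zeta n k ^ b = 1"
  then obtain j :: int where j: "2 * pi * real b / real (n k) = of_int (2 * j) * pi"
    by (auto simp: zeta_pow exp_eq_1)
  have "real b / real (n k) = (2 * pi * real b / real (n k)) / (2 * pi)" by simp
  also have "\<dots> = of_int (2 * j) * pi / (2 * pi)" using j by simp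
  also have "\<dots> = of_int j" by simp
  finally have "real b / real (n k) = of_int j" .
  moreover have "0 < real b / real (n k)" "real b / real (n k) < 1" using assms by auto
  ultimately have "0 < j" "j < 1" by simp_all
  then show False by simp
qed

lemma sum_zeta:
  assumes "0 < b" "b < n k"
  shows "(\<Sum>a<n k. zeta n k ^ (b * a)) = 0"
proof -
  have "(\<Sum>a<n k. zeta n k ^ (b * a)) = (\<Sum>a<n k. (zeta n k ^ b) ^ a)" by (simp add: power_mult)
  also have "\<dots> = ((zeta n k ^ b) ^ n k - 1) / (zeta n k ^ b - 1)"
    using zeta_pow_ne1[of b n k] assms by (intro geometric_sum) auto
  also have "(zeta n k ^ b) ^ n k = (zeta n k ^ n k) ^ b" by (simp add: power_mult[symmetric] mult.commute)
  also have "\<dots> = 1" using zeta_pow_n[of n k] assms by simp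
  finally show ?thesis by simp
qed

lemma Zop_scale: "Zop N n (scaleH c v) = scaleH c (Zop N n v)"
  unfolding Zop_def scaleH_def by (auto simp: sum_distrib_left mult_ac fun_eq_iff)

lemma scaleH_scaleH: "scaleH a (scaleH b v) = scaleH (a * b) v"
  unfolding scaleH_def by (auto simp: fun_eq_iff)

lemma scaleH_1: "scaleH 1 v = v"
  unfolding scaleH_def by (auto simp: fun_eq_iff)

lemma Z_ket:
  assumes "1 \<le> i" "i < N" "0 < n i" "0 < n (Suc i)"
  shows "Zop N n (ket n i 0) = scaleH (of_real (sqrt (real (n (i + 1)) / real (n i)))) (phi n (i + 1) 0)"
proof (rule ext, rule ext)
  fix j b
  show "Zop N n (ket n i 0) j b = scaleH (of_real (sqrt (real (n (i + 1)) / real (n i)))) (phi n (i + 1) 0) j b"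
  proof (cases "j = Suc i \<and> b < n (Suc i)")
    case True
    have s: "(\<Sum>a<n i. zeta n i ^ (b * a) * (if a = 0 then 1 else 0)) = 1"
    proof -
      have "(\<Sum>a<n i. zeta n i ^ (b * a) * (if a = 0 then 1 else 0)) = (\<Sum>a<n i. if a = 0 then 1 else 0)"
        by (rule sum.cong) auto
      also have "\<dots> = 1" using assms(3) by (simp add: sum.delta)
      finally show ?thesis .
    qed
    have r: "sqrt (real (n (Suc i)) / real (n i)) * (1 / sqrt (real (n (Suc i)))) = 1 / sqrt (real (n i))"
      using assms by (simp add: real_sqrt_divide)
    have "complex_of_real (sqrt (real (n (Suc i)) / real (n i))) * complex_of_real (1 / sqrt (real (n (Suc i))))
        = complex_of_real (1 / sqrt (real (n i)))"
      by (metis r of_real_mult)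
    then show ?thesis using True assms s
      unfolding Zop_def scaleH_def ket_def phi_def by simp
  next
    case False
    have "j - 1 \<noteq> i" if "2 \<le> j" "j \<le> N" "b < n j" using that False by auto
    then show ?thesis using False unfolding Zop_def scaleH_def ket_def phi_def
      by auto
  qed
qed

lemma Z_phi:
  assumes "1 \<le> i" "i < N" "0 < n (Suc i)" "n (Suc i) \<le> n i"
  shows "Zop N n (phi n i 0) = ket n (Suc i) 0"
proof (rule ext, rule ext)
  fix j b
  show "Zop N n (phi n i 0) j b = ket n (Suc i) 0 j b"
  proof (cases "j = Suc i \<and> b < n (Suc i)")
    case True
    have ni: "0 < n i" using assms by simp
    have "(\<Sum>a<n i. zeta n i ^ (b * a) * phi n i 0 i a)
        = (\<Sum>a<n i. zeta n i ^ (b * a) * of_real (1 / sqrt (real (n i))))"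
      by (rule sum.cong) (auto simp: phi_def)
    also have "\<dots> = of_real (1 / sqrt (real (n i))) * (\<Sum>a<n i. zeta n i ^ (b * a))"
      by (simp add: sum_distrib_left mult_ac)
    finally have e: "(\<Sum>a<n i. zeta n i ^ (b * a) * phi n i 0 i a) = of_real (1 / sqrt (real (n i))) * (\<Sum>a<n i. zeta n i ^ (b * a))" .
    show ?thesis
    proof (cases "b = 0")
      case True
      have r: "(1 / sqrt (real (n i))) * ((1 / sqrt (real (n i))) * real (n i)) = 1"
        using ni by (simp add: field_simps)
      have "complex_of_real (1 / sqrt (real (n i))) * (complex_of_real (1 / sqrt (real (n i))) * of_nat (n i)) = 1"
        by (metis r of_real_mult of_real_of_nat_eq of_real_1)
      then show ?thesis using True \<open>j = Suc i \<and> b < n (Suc i)\<close> assms e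
        unfolding Zop_def ket_def by simp
    next
      case False
      then have "(\<Sum>a<n i. zeta n i ^ (b * a)) = 0"
        using True assms by (intro sum_zeta) auto
      then show ?thesis using False True assms e
        unfolding Zop_def ket_def by simp
    qed
  next
    case False
    have "j - 1 \<noteq> i" if "2 \<le> j" "j \<le> N" "b < n j" using that False by auto
    moreover have "\<not> (j = Suc i \<and> b = 0)" using False assms by auto
    ultimately show ?thesis unfolding Zop_def ket_def phi_def
      by auto
  qed
qed


lemma npos:
  fixes n :: "nat \<Rightarrow> nat"
  assumes "\<And>i. 1 \<le> i \<Longrightarrow> i < N \<Longrightarrow> n (Suc i) \<le> n i" "n N \<ge> 1" "1 \<le> i" "i \<le> N"
  shows "0 < n i"
  using assms(4,3)
proof (induction i rule: inc_induct)
  case base then show ?case using assms(2) by linarith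
next
  case (step m)
  then show ?case using assms(1)[of m] by simp
qed

theorem corollary2p11:
  fixes N :: nat and n :: "nat \<Rightarrow> nat" and k m :: nat
  assumes "N \<ge> 2"
    and "\<And>i. 1 \<le> i \<Longrightarrow> i < N \<Longrightarrow> n (Suc i) \<le> n i"
    and "n N \<ge> 1"
    and "1 \<le> k" and "k \<le> N - 1"
    and "1 \<le> m" and "2 * m \<le> N - k"
  shows "(Zop N n ^^ (2 * m - 1)) (ket n k 0) =
           scaleH (of_real (\<Prod>j<m. sqrt (real (n (k + 2 * j + 1)) / real (n (k + 2 * j)))))
                  (phi n (k + 2 * m - 1) 0)
       \<and> (Zop N n ^^ (2 * m)) (ket n k 0) =
           scaleH (of_real (\<Prod>j<m. sqrt (real (n (k + 2 * j + 1)) / real (n (k + 2 * j)))))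
                  (ket n (k + 2 * m) 0)"
proof -
  define c where "c m = (\<Prod>j<m. sqrt (real (n (k + 2 * j + 1)) / real (n (k + 2 * j))))" for m
  have pos: "0 < n i" if "1 \<le> i" "i \<le> N" for i using npos[OF assms(2,3) that] .
  have odd: "(Zop N n ^^ Suc (2 * m)) (ket n k 0) = scaleH (of_real (c (Suc m))) (phi n (k + 2 * m + 1) 0)"
    if ev: "(Zop N n ^^ (2 * m)) (ket n k 0) = scaleH (of_real (c m)) (ket n (k + 2 * m) 0)"
      and le: "2 * m + 1 \<le> N - k" for m
  proof -
    have "(Zop N n ^^ Suc (2 * m)) (ket n k 0) = Zop N n (scaleH (of_real (c m)) (ket n (k + 2 * m) 0))"
      using ev by simp
    also have "\<dots> = scaleH (of_real (c m)) (scaleH (of_real (sqrt (real (n (k + 2 * m + 1)) / real (n (k + 2 * m))))) (phi n (k + 2 * m + 1) 0))"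
      using le assms(4) by (simp add: Zop_scale Z_ket pos)
    also have "\<dots> = scaleH (of_real (c (Suc m))) (phi n (k + 2 * m + 1) 0)"
      by (simp add: scaleH_scaleH c_def)
    finally show ?thesis .
  qed
  have ev: "(Zop N n ^^ (2 * m)) (ket n k 0) = scaleH (of_real (c m)) (ket n (k + 2 * m) 0)"
    if "2 * m \<le> N - k" for m
    using that
  proof (induction m)
    case 0
    then show ?case by (simp add: c_def scaleH_1)
  next
    case (Suc m)
    have o: "(Zop N n ^^ Suc (2 * m)) (ket n k 0) = scaleH (of_real (c (Suc m))) (phi n (k + 2 * m + 1) 0)"
      using Suc by (intro odd) auto
    have "(Zop N n ^^ (2 * Suc m)) (ket n k 0) = Zop N n ((Zop N n ^^ Suc (2 * m)) (ket n k 0))"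
      by simp
    also have "\<dots> = scaleH (of_real (c (Suc m))) (ket n (Suc (k + 2 * m + 1)) 0)"
      unfolding o Zop_scale using Suc.prems assms(4)
      by (subst Z_phi) (auto intro!: pos assms(2))
    finally show ?case by simp
  qed
  obtain m' where m': "m = Suc m'" using assms(6) by (cases m) auto
  have e1: "(Zop N n ^^ (2 * m)) (ket n k 0) = scaleH (of_real (c m)) (ket n (k + 2 * m) 0)"
    using ev assms(7) by blast
  have e2: "(Zop N n ^^ (2 * m - 1)) (ket n k 0) = scaleH (of_real (c m)) (phi n (k + 2 * m - 1) 0)"
    using odd[OF ev[of m']] assms(7) m' by simp
  show ?thesis using e1 e2 unfolding c_def by simp
qed

end
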